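(* Let $\alpha,\beta$ be real constants with $\alpha\beta^2-4\alpha^2\neq 0$, and let $\Omega\subseteq\mathbb{R}^2$ be a domain. Let $A,B,E,F,G:\Omega\to\mathbb{C}(\alpha,\beta)$ be continuously differentiable functions and let $C,D:\Omega\to\mathbb{C}(\alpha,\beta)$ be arbitrary functions. Define the operator $$\mathbf{L}w := A\,\partial_z w + B\,\overline{\partial_z w} + C\,\partial_{\bar z} w + D\,\overline{\partial_{\bar z} w} + E\,w + F\,\overline{w} + G,$$ acting on twice continuously differentiable functions $w:\Omega\to\mathbb{C}(\alpha,\beta)$ (all products taken in $\mathbb{C}(\alpha,\beta)$). Then $\mathbf{L}$ is associated to the Cauchy–Riemann operator $\partial_{\bar z}$ (i.e. $\partial_{\bar z}w=0$ implies $\partial_{\bar z}(\mathbf{L}w)=0$) if and only if $B\equiv 0$, $F\equiv 0$, and $A$, $E$, $G$ are holomorphic in $\Omega$ (i.e. $\partial_{\bar z}A=\partial_{\bar z}E=\partial_{\bar z}G=0$).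
   Context: For real parameters $\alpha,\beta$, $\mathbb{C}(\alpha,\beta)$ denotes the real algebra of numbers $z=x+iy$ ($x,y\in\mathbb{R}$) with $i^2=-\alpha-\beta i$ (structure polynomial $X^2+\beta X+\alpha$); thus $(x_1+iy_1)(x_2+iy_2)=(x_1x_2-\alpha y_1y_2)+i(x_1y_2+x_2y_1-\beta y_1y_2)$, which is commutative and associative. Conjugation is $\overline{x+iy}=x-iy$. For a differentiable function $w=u+iv$ of $(x,y)$ with real $u,v$, the Cauchy–Riemann operator is $\partial_{\bar z}=\tfrac12(\partial_x+i\partial_y)$ and its conjugate is $\partial_z=\tfrac12(\partial_x-i\partial_y)$ (multiplication by $i$ in $\mathbb{C}(\alpha,\beta)$). A function $w$ is holomorphic if $\partial_{\bar z}w=0$, equivalently $\partial_xu-\alpha\partial_yv=0$ and $\partial_yu+\partial_xv-\beta\partial_yv=0$. Two differential operators $\mathbf{L},\mathbf{G}$ are called associated if $\mathbf{G}w=0$ implies $\mathbf{G}(\mathbf{L}w)=0$. *)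

theory Defs
  imports "HOL-Analysis.Analysis"
begin

text \<open>Elements of the algebra C(alpha,beta) are represented as pairs (x,y) meaning x + i y.
Points of the plane are pairs of reals as well.\<close>

type_synonym cab = "real \<times> real"

definition cmul :: "real \<Rightarrow> real \<Rightarrow> cab \<Rightarrow> cab \<Rightarrow> cab" where
  "cmul \<alpha> \<beta> z w = (fst z * fst w - \<alpha> * snd z * snd w,
                     fst z * snd w + fst w * snd z - \<beta> * snd z * snd w)"

definition cconj :: "cab \<Rightarrow> cab" where
  "cconj z = (fst z, - snd z)"

definition iunit :: cab where
  "iunit = (0, 1)"

definition px :: "(real \<times> real \<Rightarrow> cab) \<Rightarrow> real \<times> real \<Rightarrow> cab" where
  "px f p = frechet_derivative f (at p) (1, 0)"

definition py :: "(real \<times> real \<Rightarrow> cab) \<Rightarrow> real \<times> real \<Rightarrow> cab" where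
  "py f p = frechet_derivative f (at p) (0, 1)"

definition C1_on :: "(real \<times> real) set \<Rightarrow> (real \<times> real \<Rightarrow> cab) \<Rightarrow> bool" where
  "C1_on \<Omega> f \<longleftrightarrow> (\<forall>p\<in>\<Omega>. f differentiable (at p))
      \<and> continuous_on \<Omega> (px f) \<and> continuous_on \<Omega> (py f)"

definition C2_on :: "(real \<times> real) set \<Rightarrow> (real \<times> real \<Rightarrow> cab) \<Rightarrow> bool" where
  "C2_on \<Omega> f \<longleftrightarrow> C1_on \<Omega> f \<and> C1_on \<Omega> (px f) \<and> C1_on \<Omega> (py f)"

definition dzbar :: "real \<Rightarrow> real \<Rightarrow> (real \<times> real \<Rightarrow> cab) \<Rightarrow> real \<times> real \<Rightarrow> cab" where
  "dzbar \<alpha> \<beta> f p = (1/2) *\<^sub>R (px f p + cmul \<alpha> \<beta> iunit (py f p))"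

definition dz :: "real \<Rightarrow> real \<Rightarrow> (real \<times> real \<Rightarrow> cab) \<Rightarrow> real \<times> real \<Rightarrow> cab" where
  "dz \<alpha> \<beta> f p = (1/2) *\<^sub>R (px f p - cmul \<alpha> \<beta> iunit (py f p))"

definition holomorphic_ab_on :: "real \<Rightarrow> real \<Rightarrow> (real \<times> real) set \<Rightarrow> (real \<times> real \<Rightarrow> cab) \<Rightarrow> bool" where
  "holomorphic_ab_on \<alpha> \<beta> \<Omega> f \<longleftrightarrow> (\<forall>p\<in>\<Omega>. dzbar \<alpha> \<beta> f p = 0)"

definition Lop :: "real \<Rightarrow> real \<Rightarrow> (real \<times> real \<Rightarrow> cab) \<Rightarrow> (real \<times> real \<Rightarrow> cab) \<Rightarrow>
   (real \<times> real \<Rightarrow> cab) \<Rightarrow> (real \<times> real \<Rightarrow> cab) \<Rightarrow> (real \<times> real \<Rightarrow> cab) \<Rightarrow>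
   (real \<times> real \<Rightarrow> cab) \<Rightarrow> (real \<times> real \<Rightarrow> cab) \<Rightarrow> (real \<times> real \<Rightarrow> cab) \<Rightarrow> real \<times> real \<Rightarrow> cab" where
  "Lop \<alpha> \<beta> A B C D E F G w = (\<lambda>p.
      cmul \<alpha> \<beta> (A p) (dz \<alpha> \<beta> w p) + cmul \<alpha> \<beta> (B p) (cconj (dz \<alpha> \<beta> w p))
    + cmul \<alpha> \<beta> (C p) (dzbar \<alpha> \<beta> w p) + cmul \<alpha> \<beta> (D p) (cconj (dzbar \<alpha> \<beta> w p))
    + cmul \<alpha> \<beta> (E p) (w p) + cmul \<alpha> \<beta> (F p) (cconj (w p)) + G p)"

definition associated_CR :: "real \<Rightarrow> real \<Rightarrow> (real \<times> real) set \<Rightarrow>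
   ((real \<times> real \<Rightarrow> cab) \<Rightarrow> real \<times> real \<Rightarrow> cab) \<Rightarrow> bool" where
  "associated_CR \<alpha> \<beta> \<Omega> L \<longleftrightarrow> (\<forall>w. C2_on \<Omega> w \<longrightarrow>
      holomorphic_ab_on \<alpha> \<beta> \<Omega> w \<longrightarrow> holomorphic_ab_on \<alpha> \<beta> \<Omega> (L w))"

end

theory Submission
  imports Defs
begin


lemma deriv_along_x:
  fixes f :: "real \<times> real \<Rightarrow> real"
  assumes "(f has_derivative (\<lambda>k. fst k * gx + snd k * gy)) (at (t,c))"
  shows "((\<lambda>s. f (s,c)) has_real_derivative gx) (at t)"
proof -
  have "((\<lambda>s. (s,c)) has_derivative (\<lambda>k. (k,0))) (at t)"
    by (auto intro!: derivative_eq_intros)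
  from has_derivative_compose[OF this assms] show ?thesis
    unfolding has_field_derivative_def by (simp add: mult.commute[of _ gx] mult.commute[of _ gy])
qed

lemma deriv_along_y:
  fixes f :: "real \<times> real \<Rightarrow> real"
  assumes "(f has_derivative (\<lambda>k. fst k * gx + snd k * gy)) (at (c,t))"
  shows "((\<lambda>s. f (c,s)) has_real_derivative gy) (at t)"
proof -
  have "((\<lambda>s. (c,s)) has_derivative (\<lambda>k. (0,k))) (at t)"
    by (auto intro!: derivative_eq_intros)
  from has_derivative_compose[OF this assms] show ?thesis
    unfolding has_field_derivative_def by (simp add: mult.commute[of _ gx] mult.commute[of _ gy])
qed

lemma deriv_along_x':
  fixes f :: "real \<times> real \<Rightarrow> real"
  assumes "\<And>q. q \<in> S \<Longrightarrow> (f has_derivative (\<lambda>k. fst k * gx q + snd k * gy q)) (at q)" "(t,c) \<in> S"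
  shows "((\<lambda>s. f (s,c)) has_real_derivative gx (t,c)) (at t)"
  using deriv_along_x[OF assms(1)[OF assms(2)]] .
lemma deriv_along_y':
  fixes f :: "real \<times> real \<Rightarrow> real"
  assumes "\<And>q. q \<in> S \<Longrightarrow> (f has_derivative (\<lambda>k. fst k * gx q + snd k * gy q)) (at q)" "(c,t) \<in> S"
  shows "((\<lambda>s. f (c,s)) has_real_derivative gy (c,t)) (at t)"
  using deriv_along_y[OF assms(1)[OF assms(2)]] .

lemma schwarz:
  fixes f fx fy fxx fxy fyx fyy :: "real \<times> real \<Rightarrow> real"
  assumes S: "open S" "(a,b) \<in> S"
    and df: "\<And>q. q\<in>S \<Longrightarrow> (f has_derivative (\<lambda>k. fst k * fx q + snd k * fy q)) (at q)"
    and dfx: "\<And>q. q\<in>S \<Longrightarrow> (fx has_derivative (\<lambda>k. fst k * fxx q + snd k * fxy q)) (at q)"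
    and dfy: "\<And>q. q\<in>S \<Longrightarrow> (fy has_derivative (\<lambda>k. fst k * fyx q + snd k * fyy q)) (at q)"
    and c1: "continuous_on S fxy" and c2: "continuous_on S fyx"
  shows "fxy (a,b) = fyx (a,b)"
proof (rule ccontr)
  assume ne: "fxy (a,b) \<noteq> fyx (a,b)"
  define d where "d = \<bar>fxy (a,b) - fyx (a,b)\<bar>"
  have d: "d > 0" using ne by (simp add: d_def)
  have ic1: "isCont fxy (a,b)" using c1 S continuous_on_eq_continuous_at by blast
  have ic2: "isCont fyx (a,b)" using c2 S continuous_on_eq_continuous_at by blast
  obtain e1 where e1: "e1 > 0" "\<forall>q. dist q (a,b) < e1 \<longrightarrow> dist (fxy q) (fxy (a,b)) < d/2"
    using ic1[unfolded continuous_at_eps_delta] d by (meson half_gt_zero)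
  obtain e2 where e2: "e2 > 0" "\<forall>q. dist q (a,b) < e2 \<longrightarrow> dist (fyx q) (fyx (a,b)) < d/2"
    using ic2[unfolded continuous_at_eps_delta] d by (meson half_gt_zero)
  obtain e3 where e3: "e3 > 0" "ball (a,b) e3 \<subseteq> S"
    using S open_contains_ball by blast
  define e where "e = min e1 (min e2 e3)"
  have e: "e > 0" using e1 e2 e3 by (simp add: e_def)
  define h where "h = e/2"
  have h: "h > 0" using e by (simp add: h_def)
  have inball: "dist (s,t) (a,b) < e" if "a \<le> s" "s \<le> a+h" "b \<le> t" "t \<le> b+h" for s t
  proof -
    have "dist (s,t) (a,b) = sqrt ((s-a)^2 + (t-b)^2)"
      by (simp add: dist_Pair_Pair dist_real_def)
    also have "(s-a)^2 + (t-b)^2 \<le> h^2 + h^2"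
      using that by (intro add_mono power_mono) auto
    hence "sqrt ((s-a)^2 + (t-b)^2) \<le> sqrt (2 * h^2)" by simp
    also have "sqrt (2*h^2) = sqrt 2 * h" using h by (simp add: real_sqrt_mult)
    also have "\<dots> < 2 * h" using h by (intro mult_strict_right_mono) (auto simp: real_sqrt_less_iff real_less_lsqrt)
    finally show ?thesis by (simp add: h_def)
  qed
  have inS: "(s,t) \<in> S" if "a \<le> s" "s \<le> a+h" "b \<le> t" "t \<le> b+h" for s t
    using inball[OF that] e3 e_def by (auto simp: dist_commute)
  define \<Delta> where "\<Delta> = f (a+h,b+h) - f (a+h,b) - f (a,b+h) + f (a,b)"
  have D1: "DERIV (\<lambda>s. f (s,b+h) - f (s,b)) x :> fx (x,b+h) - fx (x,b)" if "a \<le> x \<and> x \<le> a+h" for x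
  proof -
    have 1: "(x,b+h) \<in> S" "(x,b) \<in> S" using that h by (auto intro: inS)
    show ?thesis using deriv_along_x'[where S=S and gx=fx and gy=fy, OF df 1(1)]
        deriv_along_x'[where S=S and gx=fx and gy=fy, OF df 1(2)] by (rule DERIV_diff)
  qed
  obtain \<xi> where \<xi>: "a < \<xi>" "\<xi> < a+h"
    "(f (a+h,b+h) - f (a+h,b)) - (f (a,b+h) - f (a,b)) = (a+h-a) * (fx (\<xi>,b+h) - fx (\<xi>,b))"
    using MVT2[of a "a+h" "\<lambda>s. f (s,b+h) - f (s,b)" "\<lambda>x. fx (x,b+h) - fx (x,b)"] D1 h by auto
  have D2: "DERIV (\<lambda>s. fx (\<xi>,s)) x :> fxy (\<xi>,x)" if "b \<le> x \<and> x \<le> b+h" for x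
  proof -
    have 1: "(\<xi>,x) \<in> S" using that h \<xi> by (auto intro: inS)
    show ?thesis using deriv_along_y'[where S=S and gx=fxx and gy=fxy, OF dfx 1] .
  qed
  obtain \<eta> where \<eta>: "b < \<eta>" "\<eta> < b+h" "fx (\<xi>,b+h) - fx (\<xi>,b) = (b+h-b) * fxy (\<xi>,\<eta>)"
    using MVT2[of b "b+h" "\<lambda>s. fx (\<xi>,s)" "\<lambda>x. fxy (\<xi>,x)"] D2 h by auto
  have D3: "DERIV (\<lambda>s. f (a+h,s) - f (a,s)) x :> fy (a+h,x) - fy (a,x)" if "b \<le> x \<and> x \<le> b+h" for x
  proof -
    have 1: "(a+h,x) \<in> S" "(a,x) \<in> S" using that h by (auto intro: inS)
    show ?thesis using deriv_along_y'[where S=S and gx=fx and gy=fy, OF df 1(1)]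
        deriv_along_y'[where S=S and gx=fx and gy=fy, OF df 1(2)] by (rule DERIV_diff)
  qed
  obtain \<eta>' where \<eta>': "b < \<eta>'" "\<eta>' < b+h"
    "(f (a+h,b+h) - f (a,b+h)) - (f (a+h,b) - f (a,b)) = (b+h-b) * (fy (a+h,\<eta>') - fy (a,\<eta>'))"
    using MVT2[of b "b+h" "\<lambda>s. f (a+h,s) - f (a,s)" "\<lambda>x. fy (a+h,x) - fy (a,x)"] D3 h by auto
  have D4: "DERIV (\<lambda>s. fy (s,\<eta>')) x :> fyx (x,\<eta>')" if "a \<le> x \<and> x \<le> a+h" for x
  proof -
    have 1: "(x,\<eta>') \<in> S" using that h \<eta>' by (auto intro: inS)
    show ?thesis using deriv_along_x'[where S=S and gx=fyx and gy=fyy, OF dfy 1] .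
  qed
  obtain \<xi>' where \<xi>': "a < \<xi>'" "\<xi>' < a+h" "fy (a+h,\<eta>') - fy (a,\<eta>') = (a+h-a) * fyx (\<xi>',\<eta>')"
    using MVT2[of a "a+h" "\<lambda>s. fy (s,\<eta>')" "\<lambda>x. fyx (x,\<eta>')"] D4 h by auto
  have "h * (h * fxy (\<xi>,\<eta>)) = h * (h * fyx (\<xi>',\<eta>'))"
  proof -
    have "h * (h * fxy (\<xi>,\<eta>)) = (f (a+h,b+h) - f (a+h,b)) - (f (a,b+h) - f (a,b))"
      using \<xi>(3) \<eta>(3) by simp
    also have "\<dots> = (f (a+h,b+h) - f (a,b+h)) - (f (a+h,b) - f (a,b))" by simp
    also have "\<dots> = h * (h * fyx (\<xi>',\<eta>'))" using \<eta>'(3) \<xi>'(3) by simp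
    finally show ?thesis .
  qed
  hence eq: "fxy (\<xi>,\<eta>) = fyx (\<xi>',\<eta>')" using h by simp
  have "dist (\<xi>,\<eta>) (a,b) < e1" using inball[of \<xi> \<eta>] \<xi> \<eta> e_def by auto
  hence A1: "\<bar>fxy (\<xi>,\<eta>) - fxy (a,b)\<bar> < d/2" using e1 by (auto simp: dist_real_def)
  have "dist (\<xi>',\<eta>') (a,b) < e2" using inball[of \<xi>' \<eta>'] \<xi>' \<eta>' e_def by auto
  hence A2: "\<bar>fyx (\<xi>',\<eta>') - fyx (a,b)\<bar> < d/2" using e2 by (auto simp: dist_real_def)
  show False using A1 A2 eq d_def by linarith
qed




lemma cmul_zero[simp]: "cmul a b 0 z = 0" "cmul a b z 0 = 0"
  by (simp_all add: cmul_def zero_prod_def)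

lemma cconj_zero[simp]: "cconj 0 = 0" by (simp add: cconj_def zero_prod_def)

lemma cmul_deriv:
  assumes "(f has_derivative f') (at p)" "(g has_derivative g') (at p)"
  shows "((\<lambda>q. cmul a b (f q) (g q)) has_derivative (\<lambda>h. cmul a b (f p) (g' h) + cmul a b (f' h) (g p))) (at p)"
proof -
  note f1 = has_derivative_fst[OF assms(1)] and f2 = has_derivative_snd[OF assms(1)]
  note g1 = has_derivative_fst[OF assms(2)] and g2 = has_derivative_snd[OF assms(2)]
  show ?thesis
  unfolding cmul_def
  apply (rule has_derivative_eq_rhs)
   apply (rule has_derivative_Pair)
    apply (rule f1 f2 g1 g2 derivative_eq_intros refl)+
  apply (rule ext) apply (simp add: algebra_simps)
  done
qed

lemma cconj_deriv:
  assumes "(f has_derivative f') (at p)"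
  shows "((\<lambda>q. cconj (f q)) has_derivative (\<lambda>h. cconj (f' h))) (at p)"
  unfolding cconj_def
  by (intro has_derivative_Pair has_derivative_fst has_derivative_snd has_derivative_minus assms)

lemma deriv_decomp:
  assumes "(f has_derivative f') (at p)"
  shows "f' h = fst h *\<^sub>R f' (1,0) + snd h *\<^sub>R f' (0,1)"
proof -
  have l: "linear f'" using assms has_derivative_linear by blast
  have eq: "h = fst h *\<^sub>R (1,0) + snd h *\<^sub>R (0,1)" by (simp add: prod_eq_iff)
  have "f' h = f' (fst h *\<^sub>R (1,0) + snd h *\<^sub>R (0,1))" by (subst eq) (rule refl)
  also have "\<dots> = fst h *\<^sub>R f' (1,0) + snd h *\<^sub>R f' (0,1)"
    unfolding linear_add[OF l] linear_scale[OF l] by (rule refl)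
  finally show ?thesis .
qed

lemma pxpy_of:
  assumes "(f has_derivative f') (at p)"
  shows "px f p = f' (1,0)" "py f p = f' (0,1)"
  using frechet_derivative_at[OF assms] by (simp_all add: px_def py_def)

lemma dzbar_of:
  assumes "(f has_derivative f') (at p)"
  shows "dzbar a b f p = (1/2) *\<^sub>R (f' (1,0) + cmul a b iunit (f' (0,1)))"
  using pxpy_of[OF assms] by (simp add: dzbar_def)

lemma dz_of:
  assumes "(f has_derivative f') (at p)"
  shows "dz a b f p = (1/2) *\<^sub>R (f' (1,0) - cmul a b iunit (f' (0,1)))"
  using pxpy_of[OF assms] by (simp add: dz_def)

lemma fd_local:
  assumes "open S" "p \<in> S" "\<And>q. q \<in> S \<Longrightarrow> f q = g q"
  shows "frechet_derivative f (at p) = frechet_derivative g (at p)"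
proof -
  have "\<And>f'. (f has_derivative f') (at p) \<longleftrightarrow> (g has_derivative f') (at p)"
    using has_derivative_transform_within_open[of f _ p UNIV S g] has_derivative_transform_within_open[of g _ p UNIV S f]
      assms by metis
  thus ?thesis unfolding frechet_derivative_def by simp
qed

lemma dzbar_local:
  assumes "open S" "p \<in> S" "\<And>q. q \<in> S \<Longrightarrow> f q = g q"
  shows "dzbar a b f p = dzbar a b g p"
  using fd_local[OF assms] by (simp add: dzbar_def px_def py_def)

lemma C1_deriv:
  assumes "C1_on S f" "q \<in> S"
  shows "(f has_derivative (\<lambda>k. fst k *\<^sub>R px f q + snd k *\<^sub>R py f q)) (at q)"
proof -
  have "f differentiable (at q)" using assms by (simp add: C1_on_def)
  hence d: "(f has_derivative frechet_derivative f (at q)) (at q)" by (simp add: frechet_derivative_works)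
  show ?thesis
    apply (rule has_derivative_eq_rhs[OF d])
    apply (rule ext)
    apply (subst deriv_decomp[OF d])
    apply (simp only: pxpy_of[OF d])
    done
qed

lemma schwarz_C2:
  assumes "open S" "p \<in> S" "C2_on S w"
  shows "py (px w) p = px (py w) p"
proof -
  obtain a b where p: "p = (a,b)" by (cases p)
  have w: "C1_on S w" and wx: "C1_on S (px w)" and wy: "C1_on S (py w)"
    using assms by (auto simp: C2_on_def)
  have c: "continuous_on S (py (px w))" "continuous_on S (px (py w))"
    using wx wy by (auto simp: C1_on_def)
  have "fst (py (px w) p) = fst (px (py w) p)"
    unfolding p
    apply (rule schwarz[where f="\<lambda>q. fst (w q)" and fx="\<lambda>q. fst (px w q)" and fy="\<lambda>q. fst (py w q)"
       and fxx="\<lambda>q. fst (px (px w) q)" and fyy="\<lambda>q. fst (py (py w) q)", OF assms(1) assms(2)[unfolded p]])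
    subgoal for q by (rule has_derivative_eq_rhs[OF has_derivative_fst[OF C1_deriv[OF w]]]) auto
    subgoal for q by (rule has_derivative_eq_rhs[OF has_derivative_fst[OF C1_deriv[OF wx]]]) auto
    subgoal for q by (rule has_derivative_eq_rhs[OF has_derivative_fst[OF C1_deriv[OF wy]]]) auto
    subgoal by (rule continuous_on_fst[OF c(1)])
    subgoal by (rule continuous_on_fst[OF c(2)])
    done
  moreover have "snd (py (px w) p) = snd (px (py w) p)"
    unfolding p
    apply (rule schwarz[where f="\<lambda>q. snd (w q)" and fx="\<lambda>q. snd (px w q)" and fy="\<lambda>q. snd (py w q)"
       and fxx="\<lambda>q. snd (px (px w) q)" and fyy="\<lambda>q. snd (py (py w) q)", OF assms(1) assms(2)[unfolded p]])
    subgoal for q by (rule has_derivative_eq_rhs[OF has_derivative_snd[OF C1_deriv[OF w]]]) auto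
    subgoal for q by (rule has_derivative_eq_rhs[OF has_derivative_snd[OF C1_deriv[OF wx]]]) auto
    subgoal for q by (rule has_derivative_eq_rhs[OF has_derivative_snd[OF C1_deriv[OF wy]]]) auto
    subgoal by (rule continuous_on_snd[OF c(1)])
    subgoal by (rule continuous_on_snd[OF c(2)])
    done
  ultimately show ?thesis by (simp add: prod_eq_iff)
qed


lemma cmul_add_right: "cmul a b z (x + y) = cmul a b z x + cmul a b z y"
  by (simp add: cmul_def algebra_simps)
lemma cmul_add_left: "cmul a b (x + y) z = cmul a b x z + cmul a b y z"
  by (simp add: cmul_def algebra_simps)

lemma cmul_differentiable:
  assumes "f differentiable (at p)" "g differentiable (at p)"
  shows "(\<lambda>q. cmul a b (f q) (g q)) differentiable (at p)"
  using assms cmul_deriv unfolding differentiable_def by blast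

lemma cconj_differentiable:
  assumes "f differentiable (at p)"
  shows "(\<lambda>q. cconj (f q)) differentiable (at p)"
  using assms cconj_deriv unfolding differentiable_def by blast

lemma dzbar_add:
  assumes "f differentiable (at p)" "g differentiable (at p)"
  shows "dzbar a b (\<lambda>q. f q + g q) p = dzbar a b f p + dzbar a b g p"
proof -
  obtain f' g' where f: "(f has_derivative f') (at p)" and g: "(g has_derivative g') (at p)"
    using assms unfolding differentiable_def by blast
  show ?thesis
    using dzbar_of[OF f] dzbar_of[OF g] dzbar_of[OF has_derivative_add[OF f g]]
    by (simp add: cmul_add_right algebra_simps)
qed

lemma dzbar_mult:
  assumes "f differentiable (at p)" "g differentiable (at p)"
  shows "dzbar a b (\<lambda>q. cmul a b (f q) (g q)) p = cmul a b (f p) (dzbar a b g p) + cmul a b (dzbar a b f p) (g p)"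
proof -
  obtain f' g' where f: "(f has_derivative f') (at p)" and g: "(g has_derivative g') (at p)"
    using assms unfolding differentiable_def by blast
  show ?thesis
    unfolding dzbar_of[OF f] dzbar_of[OF g] dzbar_of[OF cmul_deriv[OF f g]]
    by (simp add: cmul_def iunit_def prod_eq_iff algebra_simps)
qed

lemma alg1:
  assumes "X1 + cmul a b iunit Y1 = 0" "X2 + cmul a b iunit Y2 = 0" "X2 = Y1"
  shows "(1/2::real) *\<^sub>R ((1/2::real) *\<^sub>R (X1 - cmul a b iunit Y1) + cmul a b iunit ((1/2::real) *\<^sub>R (X2 - cmul a b iunit Y2))) = 0"
  using assms by (simp add: cmul_def iunit_def prod_eq_iff algebra_simps) algebra


lemma dzbar_dz_zero:
  assumes O: "open \<Omega>" "p \<in> \<Omega>" and w: "C2_on \<Omega> w" "holomorphic_ab_on a b \<Omega> w"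
  shows "dzbar a b (dz a b w) p = 0"
    and "(dz a b w) differentiable (at p)"
proof -
  have wx: "px w differentiable (at p)" and wy: "py w differentiable (at p)"
    using w O by (auto simp: C2_on_def C1_on_def)
  define Px where "Px = frechet_derivative (px w) (at p)"
  define Py where "Py = frechet_derivative (py w) (at p)"
  have dPx: "(px w has_derivative Px) (at p)" using wx by (simp add: Px_def frechet_derivative_works)
  have dPy: "(py w has_derivative Py) (at p)" using wy by (simp add: Py_def frechet_derivative_works)
  have ci: "((\<lambda>q. iunit) has_derivative (\<lambda>h. 0)) (at p)" by simp
  have ddz: "(dz a b w has_derivative (\<lambda>h. (1/2) *\<^sub>R (Px h - cmul a b iunit (Py h)))) (at p)"
    unfolding dz_def[abs_def]
    apply (rule has_derivative_eq_rhs)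
     apply (rule has_derivative_scaleR_right has_derivative_diff dPx cmul_deriv[OF ci dPy])+
    apply simp
    done
  have ddzbar: "(dzbar a b w has_derivative (\<lambda>h. (1/2) *\<^sub>R (Px h + cmul a b iunit (Py h)))) (at p)"
    unfolding dzbar_def[abs_def]
    apply (rule has_derivative_eq_rhs)
     apply (rule has_derivative_scaleR_right has_derivative_add dPx cmul_deriv[OF ci dPy])+
    apply simp
    done
  have "((\<lambda>q. 0::cab) has_derivative (\<lambda>h. 0)) (at p)" by simp
  hence "(dzbar a b w has_derivative (\<lambda>h. 0)) (at p)"
    by (rule has_derivative_transform_within_open[OF _ O]) (use w in \<open>simp add: holomorphic_ab_on_def\<close>)
  from has_derivative_unique[OF ddzbar this]
  have z: "\<And>h. Px h + cmul a b iunit (Py h) = 0" by (metis scaleR_eq_0_iff zero_neq_numeral divide_eq_0_iff one_neq_zero)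
  have sym: "Px (0,1) = Py (1,0)"
    using schwarz_C2[OF O w(1)] pxpy_of[OF dPx] pxpy_of[OF dPy] by simp
  show "dzbar a b (dz a b w) p = 0"
    unfolding dzbar_of[OF ddz] by (rule alg1[OF z z sym])
  show "(dz a b w) differentiable (at p)" using ddz differentiable_def by blast
qed


lemma formula:
  assumes O: "open \<Omega>" "p \<in> \<Omega>" and w: "C2_on \<Omega> w" "holomorphic_ab_on a b \<Omega> w"
    and dA: "A differentiable (at p)" and dB: "B differentiable (at p)"
    and dE: "E differentiable (at p)" and dF: "F differentiable (at p)" and dG: "G differentiable (at p)"
  shows "dzbar a b (Lop a b A B C D E F G w) p =
     cmul a b (dzbar a b A p) (dz a b w p) + cmul a b (dzbar a b B p) (cconj (dz a b w p))
   + cmul a b (B p) (dzbar a b (\<lambda>q. cconj (dz a b w q)) p)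
   + cmul a b (dzbar a b E p) (w p) + cmul a b (dzbar a b F p) (cconj (w p))
   + cmul a b (F p) (dzbar a b (\<lambda>q. cconj (w q)) p) + dzbar a b G p"
proof -
  have dw: "w differentiable (at p)" using w O by (auto simp: C2_on_def C1_on_def)
  have ddz: "dz a b w differentiable (at p)" and z1: "dzbar a b (dz a b w) p = 0"
    using dzbar_dz_zero[OF O w] by auto
  have z2: "dzbar a b w p = 0" using w O by (simp add: holomorphic_ab_on_def)
  have "dzbar a b (Lop a b A B C D E F G w) p = dzbar a b (\<lambda>q.
      cmul a b (A q) (dz a b w q) + cmul a b (B q) (cconj (dz a b w q))
    + cmul a b (E q) (w q) + cmul a b (F q) (cconj (w q)) + G q) p"
    by (rule dzbar_local[OF O]) (use w in \<open>simp add: Lop_def holomorphic_ab_on_def\<close>)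
  also have "\<dots> = cmul a b (A p) (dzbar a b (dz a b w) p) + cmul a b (dzbar a b A p) (dz a b w p)
      + (cmul a b (B p) (dzbar a b (\<lambda>q. cconj (dz a b w q)) p) + cmul a b (dzbar a b B p) (cconj (dz a b w p)))
      + (cmul a b (E p) (dzbar a b w p) + cmul a b (dzbar a b E p) (w p))
      + (cmul a b (F p) (dzbar a b (\<lambda>q. cconj (w q)) p) + cmul a b (dzbar a b F p) (cconj (w p)))
      + dzbar a b G p"
    by (simp add: dzbar_add dzbar_mult cmul_differentiable cconj_differentiable dA dB dE dF dG dw ddz)
  finally show ?thesis using z1 z2 by (simp add: algebra_simps)
qed


definition poly2 :: "cab \<Rightarrow> cab \<Rightarrow> cab \<Rightarrow> cab \<Rightarrow> cab \<Rightarrow> cab \<Rightarrow> real \<times> real \<Rightarrow> cab" where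
  "poly2 a0 a1 a2 a3 a4 a5 = (\<lambda>q. a0 + fst q *\<^sub>R a1 + snd q *\<^sub>R a2 + (fst q)^2 *\<^sub>R a3
      + (fst q * snd q) *\<^sub>R a4 + (snd q)^2 *\<^sub>R a5)"

lemma poly2_deriv:
  "(poly2 a0 a1 a2 a3 a4 a5 has_derivative
     (\<lambda>k. fst k *\<^sub>R (a1 + (2 * fst q) *\<^sub>R a3 + snd q *\<^sub>R a4) + snd k *\<^sub>R (a2 + fst q *\<^sub>R a4 + (2 * snd q) *\<^sub>R a5))) (at q)"
  unfolding poly2_def
  apply (rule has_derivative_eq_rhs)
   apply (rule derivative_eq_intros refl)+
  apply (rule ext)
  apply (simp add: algebra_simps scaleR_add_right)
  done

lemma px_poly2: "px (poly2 a0 a1 a2 a3 a4 a5) = poly2 a1 (2 *\<^sub>R a3) a4 0 0 0"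
  by (rule ext, subst pxpy_of[OF poly2_deriv]) (simp add: poly2_def algebra_simps)

lemma py_poly2: "py (poly2 a0 a1 a2 a3 a4 a5) = poly2 a2 a4 (2 *\<^sub>R a5) 0 0 0"
  by (rule ext, subst pxpy_of[OF poly2_deriv]) (simp add: poly2_def algebra_simps)

lemma poly2_cont: "continuous_on S (poly2 a0 a1 a2 a3 a4 a5)"
  unfolding poly2_def by (intro continuous_intros)

lemma C1_poly2: "C1_on S (poly2 a0 a1 a2 a3 a4 a5)"
  unfolding C1_on_def px_poly2 py_poly2
  using poly2_deriv differentiable_def poly2_cont by blast

lemma C2_poly2: "C2_on S (poly2 a0 a1 a2 a3 a4 a5)"
  unfolding C2_on_def px_poly2 py_poly2 using C1_poly2 by blast

lemma cmul_scaleR_right: "cmul a b z (r *\<^sub>R x) = r *\<^sub>R cmul a b z x"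
  by (simp add: cmul_def algebra_simps)

lemma dzbar_poly2: "dzbar a b (poly2 a0 a1 a2 a3 a4 a5) q =
   (1/2) *\<^sub>R ((a1 + (2 * fst q) *\<^sub>R a3 + snd q *\<^sub>R a4) + cmul a b iunit (a2 + fst q *\<^sub>R a4 + (2 * snd q) *\<^sub>R a5))"
  by (subst dzbar_of[OF poly2_deriv]) simp

lemma dz_poly2: "dz a b (poly2 a0 a1 a2 a3 a4 a5) =
   poly2 ((1/2) *\<^sub>R (a1 - cmul a b iunit a2)) ((1/2) *\<^sub>R (2 *\<^sub>R a3 - cmul a b iunit a4))
         ((1/2) *\<^sub>R (a4 - cmul a b iunit (2 *\<^sub>R a5))) 0 0 0"
  by (rule ext, subst dz_of[OF poly2_deriv]) (simp add: poly2_def cmul_add_right cmul_scaleR_right algebra_simps)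

lemma cconj_poly2: "(\<lambda>q. cconj (poly2 a0 a1 a2 a3 a4 a5 q)) =
   poly2 (cconj a0) (cconj a1) (cconj a2) (cconj a3) (cconj a4) (cconj a5)"
  by (rule ext) (simp add: poly2_def cconj_def)

lemmas tsimps = dzbar_poly2 dz_poly2 cconj_poly2 poly2_def cmul_def iunit_def cconj_def prod_eq_iff algebra_simps power2_eq_square

lemma test4:
  fixes x y :: real
  shows "dzbar a b (poly2 0 0 0 (-a,-b) (0,-2) (1,0)) q = 0"
    "poly2 0 0 0 (-a,-b) (0,-2) (1,0) (x,y) = (y*y - a*x*x, -2*x*y - b*x*x)"
    "dz a b (poly2 0 0 0 (-a,-b) (0,-2) (1,0)) (x,y) = (-2*a*x, -2*y-2*b*x)"
    "dzbar a b (\<lambda>q. cconj (dz a b (poly2 0 0 0 (-a,-b) (0,-2) (1,0)) q)) (x,y) = (-2*a, 0)"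
    "dzbar a b (\<lambda>q. cconj (poly2 0 0 0 (-a,-b) (0,-2) (1,0) q)) (x,y) = (-2*a*x, 2*y)"
  unfolding dz_poly2 cconj_poly2 dzbar_poly2 by (simp_all add: tsimps)

lemma test3:
  fixes x y :: real
  shows "dzbar a b (poly2 0 (a,b) (0,1) 0 0 0) q = 0"
    "poly2 0 (a,b) (0,1) 0 0 0 (x,y) = (a*x, y + b*x)"
    "dz a b (poly2 0 (a,b) (0,1) 0 0 0) (x,y) = (a, b)"
    "dzbar a b (\<lambda>q. cconj (dz a b (poly2 0 (a,b) (0,1) 0 0 0) q)) (x,y) = 0"
    "dzbar a b (\<lambda>q. cconj (poly2 0 (a,b) (0,1) 0 0 0 q)) (x,y) = (a, 0)"
  unfolding dz_poly2 cconj_poly2 dzbar_poly2 by (simp_all add: tsimps)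

lemma test2:
  fixes x y :: real
  shows "dzbar a b (poly2 0 (0,-1) (1,0) 0 0 0) q = 0"
    "poly2 0 (0,-1) (1,0) 0 0 0 (x,y) = (y, -x)"
    "dz a b (poly2 0 (0,-1) (1,0) 0 0 0) (x,y) = (0, -1)"
    "dzbar a b (\<lambda>q. cconj (dz a b (poly2 0 (0,-1) (1,0) 0 0 0) q)) (x,y) = 0"
    "dzbar a b (\<lambda>q. cconj (poly2 0 (0,-1) (1,0) 0 0 0 q)) (x,y) = (0, 1)"
  unfolding dz_poly2 cconj_poly2 dzbar_poly2 by (simp_all add: tsimps)

lemma test1:
  shows "dzbar a b (poly2 c 0 0 0 0 0) q = 0"
    "poly2 c 0 0 0 0 0 p = c"
    "dz a b (poly2 c 0 0 0 0 0) p = 0"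
    "dzbar a b (\<lambda>q. cconj (dz a b (poly2 c 0 0 0 0 0) q)) p = 0"
    "dzbar a b (\<lambda>q. cconj (poly2 c 0 0 0 0 0 q)) p = 0"
  unfolding dz_poly2 cconj_poly2 dzbar_poly2 by (simp_all add: tsimps)


lemma EF_zero:
  fixes e f :: cab
  assumes a: "\<alpha> \<noteq> 0"
    and h1: "cmul \<alpha> \<beta> e (1,0) + cmul \<alpha> \<beta> f (cconj (1,0)) = 0"
    and h2: "cmul \<alpha> \<beta> e (0,1) + cmul \<alpha> \<beta> f (cconj (0,1)) = 0"
  shows "e = 0 \<and> f = 0"
proof -
  obtain e1 e2 f1 f2 where ef: "e = (e1,e2)" "f = (f1,f2)" by (cases e, cases f)
  have r: "e1 + f1 = 0" "e2 + f2 = 0" "\<alpha> * (f2 - e2) = 0" "e1 - \<beta>*e2 - f1 + \<beta>*f2 = 0"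
    using h1 h2 unfolding ef by (simp_all add: cmul_def cconj_def prod_eq_iff algebra_simps)
  have "f2 = e2" using r(3) a by simp
  thus ?thesis using r ef by (simp add: zero_prod_def)
qed

lemma B_zero_alg:
  fixes a b x y a11 a12 b11 b12 B1 B2 F1 F2 :: real
  assumes "a \<noteq> 0"
    and "cmul a b (a11,a12) (0,-1) + cmul a b (b11,b12) (cconj (0,-1)) + cmul a b (F1,F2) (0,1) = 0"
    and "cmul a b (a11,a12) (a,b) + cmul a b (b11,b12) (cconj (a,b)) + cmul a b (F1,F2) (a,0) = 0"
    and "cmul a b (a11,a12) (-2*a*x, -2*y-2*b*x) + cmul a b (b11,b12) (cconj (-2*a*x, -2*y-2*b*x))
         + cmul a b (B1,B2) (-2*a,0) + cmul a b (F1,F2) (-2*a*x, 2*y) = 0"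
  shows "B1 = 0 \<and> B2 = 0"
proof -
  have "a * B1 = 0" "a * B2 = 0"
    using assms(2-4) by (simp_all add: cmul_def cconj_def prod_eq_iff) algebra+
  thus ?thesis using assms(1) by simp
qed

lemma AF_zero_alg:
  fixes a b a11 a12 F1 F2 :: real
  assumes "a * b^2 - 4 * a^2 \<noteq> 0"
    and "cmul a b (a11,a12) (0,-1) + cmul a b (F1,F2) (0,1) = 0"
    and "cmul a b (a11,a12) (a,b) + cmul a b (F1,F2) (a,0) = 0"
  shows "a11 = 0 \<and> a12 = 0 \<and> F1 = 0 \<and> F2 = 0"
proof -
  have a: "a \<noteq> 0" using assms(1) by auto
  have "a * ((a * b^2 - 4 * a^2) * F1) = 0" "a * ((a * b^2 - 4 * a^2) * F2) = 0"
       "a * ((a * b^2 - 4 * a^2) * a11) = 0" "a * ((a * b^2 - 4 * a^2) * a12) = 0"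
    using assms(2-3) by (simp_all add: cmul_def cconj_def prod_eq_iff) algebra+
  thus ?thesis using assms(1) a by simp
qed


lemma dzbar_const[simp]: "dzbar a b (\<lambda>q. c) p = 0"
  by (subst dzbar_of[of "\<lambda>q. c" "\<lambda>h. 0"]) simp_all

lemma dzbar_locally_zero:
  assumes "open \<Omega>" "p \<in> \<Omega>" "\<forall>q\<in>\<Omega>. B q = 0"
  shows "dzbar a b B p = 0"
proof -
  have "dzbar a b B p = dzbar a b (\<lambda>q. 0) p" by (rule dzbar_local) (use assms in auto)
  also have "\<dots> = 0" by (subst dzbar_of[of "\<lambda>q. 0" "\<lambda>h. 0"]) simp_all
  finally show ?thesis .
qed

theorem lemma1:
  fixes \<alpha> \<beta> :: real and \<Omega> :: "(real \<times> real) set"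
    and A B C D E F G :: "real \<times> real \<Rightarrow> real \<times> real"
  assumes "\<alpha> * \<beta>^2 - 4 * \<alpha>^2 \<noteq> 0"
    and "open \<Omega>" and "connected \<Omega>"
    and "C1_on \<Omega> A" and "C1_on \<Omega> B" and "C1_on \<Omega> E" and "C1_on \<Omega> F" and "C1_on \<Omega> G"
  shows "associated_CR \<alpha> \<beta> \<Omega> (Lop \<alpha> \<beta> A B C D E F G) \<longleftrightarrow>
    ((\<forall>p\<in>\<Omega>. B p = 0) \<and> (\<forall>p\<in>\<Omega>. F p = 0) \<and>
     holomorphic_ab_on \<alpha> \<beta> \<Omega> A \<and> holomorphic_ab_on \<alpha> \<beta> \<Omega> E \<and> holomorphic_ab_on \<alpha> \<beta> \<Omega> G)"
proof -
  have a0: "\<alpha> \<noteq> 0" using assms(1) by auto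
  note O = assms(2)
  have key: "dzbar \<alpha> \<beta> (Lop \<alpha> \<beta> A B C D E F G w) p =
     cmul \<alpha> \<beta> (dzbar \<alpha> \<beta> A p) (dz \<alpha> \<beta> w p) + cmul \<alpha> \<beta> (dzbar \<alpha> \<beta> B p) (cconj (dz \<alpha> \<beta> w p))
   + cmul \<alpha> \<beta> (B p) (dzbar \<alpha> \<beta> (\<lambda>q. cconj (dz \<alpha> \<beta> w q)) p)
   + cmul \<alpha> \<beta> (dzbar \<alpha> \<beta> E p) (w p) + cmul \<alpha> \<beta> (dzbar \<alpha> \<beta> F p) (cconj (w p))
   + cmul \<alpha> \<beta> (F p) (dzbar \<alpha> \<beta> (\<lambda>q. cconj (w q)) p) + dzbar \<alpha> \<beta> G p"
    if "C2_on \<Omega> w" "holomorphic_ab_on \<alpha> \<beta> \<Omega> w" "p \<in> \<Omega>" for w p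
    by (rule formula[OF O that(3) that(1,2)]) (use assms(4-8) that(3) in \<open>auto simp: C1_on_def\<close>)
  show ?thesis
  proof
    assume as: "associated_CR \<alpha> \<beta> \<Omega> (Lop \<alpha> \<beta> A B C D E F G)"
    have Z: "cmul \<alpha> \<beta> (dzbar \<alpha> \<beta> A p) (dz \<alpha> \<beta> w p) + cmul \<alpha> \<beta> (dzbar \<alpha> \<beta> B p) (cconj (dz \<alpha> \<beta> w p))
   + cmul \<alpha> \<beta> (B p) (dzbar \<alpha> \<beta> (\<lambda>q. cconj (dz \<alpha> \<beta> w q)) p)
   + cmul \<alpha> \<beta> (dzbar \<alpha> \<beta> E p) (w p) + cmul \<alpha> \<beta> (dzbar \<alpha> \<beta> F p) (cconj (w p))
   + cmul \<alpha> \<beta> (F p) (dzbar \<alpha> \<beta> (\<lambda>q. cconj (w q)) p) + dzbar \<alpha> \<beta> G p = 0"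
      if "C2_on \<Omega> w" "holomorphic_ab_on \<alpha> \<beta> \<Omega> w" "p \<in> \<Omega>" for w p
      using key[OF that] as that unfolding associated_CR_def holomorphic_ab_on_def by metis
    have H: "holomorphic_ab_on \<alpha> \<beta> \<Omega> (poly2 c 0 0 0 0 0)"
      "holomorphic_ab_on \<alpha> \<beta> \<Omega> (poly2 0 (0,-1) (1,0) 0 0 0)"
      "holomorphic_ab_on \<alpha> \<beta> \<Omega> (poly2 0 (\<alpha>,\<beta>) (0,1) 0 0 0)"
      "holomorphic_ab_on \<alpha> \<beta> \<Omega> (poly2 0 0 0 (-\<alpha>,-\<beta>) (0,-2) (1,0))" for c
      by (simp_all add: holomorphic_ab_on_def test1 test2 test3 test4)
    have S1: "dzbar \<alpha> \<beta> G p = 0 \<and> dzbar \<alpha> \<beta> E p = 0 \<and> dzbar \<alpha> \<beta> F p = 0 \<and> B p = 0" if p: "p \<in> \<Omega>" for p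
    proof -
      obtain x y where xy: "p = (x,y)" by (cases p)
      have g: "dzbar \<alpha> \<beta> G p = 0"
        using Z[OF C2_poly2 H(1) p, of 0] by (simp add: test1)
      have t1: "cmul \<alpha> \<beta> (dzbar \<alpha> \<beta> E p) c + cmul \<alpha> \<beta> (dzbar \<alpha> \<beta> F p) (cconj c) = 0" for c
        using Z[OF C2_poly2 H(1) p, of c] g by (simp add: test1)
      have ef: "dzbar \<alpha> \<beta> E p = 0 \<and> dzbar \<alpha> \<beta> F p = 0"
        by (rule EF_zero[OF a0 t1 t1])
      obtain a11 a12 b11 b12 B1 B2 F1 F2 where
        comp: "dzbar \<alpha> \<beta> A p = (a11,a12)" "dzbar \<alpha> \<beta> B p = (b11,b12)" "B p = (B1,B2)" "F p = (F1,F2)"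
        by (metis prod.collapse)
      have e2: "cmul \<alpha> \<beta> (a11,a12) (0,-1) + cmul \<alpha> \<beta> (b11,b12) (cconj (0,-1)) + cmul \<alpha> \<beta> (F1,F2) (0,1) = 0"
        using Z[OF C2_poly2 H(2) p] g ef comp unfolding xy by (simp add: test2)
      have e3: "cmul \<alpha> \<beta> (a11,a12) (\<alpha>,\<beta>) + cmul \<alpha> \<beta> (b11,b12) (cconj (\<alpha>,\<beta>)) + cmul \<alpha> \<beta> (F1,F2) (\<alpha>,0) = 0"
        using Z[OF C2_poly2 H(3) p] g ef comp unfolding xy by (simp add: test3)
      have e4: "cmul \<alpha> \<beta> (a11,a12) (-2*\<alpha>*x, -2*y-2*\<beta>*x) + cmul \<alpha> \<beta> (b11,b12) (cconj (-2*\<alpha>*x, -2*y-2*\<beta>*x))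
         + cmul \<alpha> \<beta> (B1,B2) (-2*\<alpha>,0) + cmul \<alpha> \<beta> (F1,F2) (-2*\<alpha>*x, 2*y) = 0"
        using Z[OF C2_poly2 H(4) p] g ef comp unfolding xy by (simp add: test4)
      have "B p = 0" using B_zero_alg[OF a0 e2 e3 e4] comp by (simp add: zero_prod_def)
      thus ?thesis using g ef by simp
    qed
    have S2: "dzbar \<alpha> \<beta> A p = 0 \<and> F p = 0" if p: "p \<in> \<Omega>" for p
    proof -
      obtain x y where xy: "p = (x,y)" by (cases p)
      have b: "dzbar \<alpha> \<beta> B p = 0" by (rule dzbar_locally_zero[OF O p]) (use S1 in auto)
      obtain a11 a12 F1 F2 where
        comp: "dzbar \<alpha> \<beta> A p = (a11,a12)" "F p = (F1,F2)"
        by (metis prod.collapse)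
      have e2: "cmul \<alpha> \<beta> (a11,a12) (0,-1) + cmul \<alpha> \<beta> (F1,F2) (0,1) = 0"
        using Z[OF C2_poly2 H(2) p] S1[OF p] b comp unfolding xy by (simp add: test2)
      have e3: "cmul \<alpha> \<beta> (a11,a12) (\<alpha>,\<beta>) + cmul \<alpha> \<beta> (F1,F2) (\<alpha>,0) = 0"
        using Z[OF C2_poly2 H(3) p] S1[OF p] b comp unfolding xy by (simp add: test3)
      show ?thesis using AF_zero_alg[OF assms(1) e2 e3] comp by (simp add: zero_prod_def)
    qed
    show "(\<forall>p\<in>\<Omega>. B p = 0) \<and> (\<forall>p\<in>\<Omega>. F p = 0) \<and>
     holomorphic_ab_on \<alpha> \<beta> \<Omega> A \<and> holomorphic_ab_on \<alpha> \<beta> \<Omega> E \<and> holomorphic_ab_on \<alpha> \<beta> \<Omega> G"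
      using S1 S2 by (simp add: holomorphic_ab_on_def)
  next
    assume as: "(\<forall>p\<in>\<Omega>. B p = 0) \<and> (\<forall>p\<in>\<Omega>. F p = 0) \<and>
     holomorphic_ab_on \<alpha> \<beta> \<Omega> A \<and> holomorphic_ab_on \<alpha> \<beta> \<Omega> E \<and> holomorphic_ab_on \<alpha> \<beta> \<Omega> G"
    show "associated_CR \<alpha> \<beta> \<Omega> (Lop \<alpha> \<beta> A B C D E F G)"
      unfolding associated_CR_def
    proof (intro allI impI)
      fix w assume w: "C2_on \<Omega> w" "holomorphic_ab_on \<alpha> \<beta> \<Omega> w"
      show "holomorphic_ab_on \<alpha> \<beta> \<Omega> (Lop \<alpha> \<beta> A B C D E F G w)"
        unfolding holomorphic_ab_on_def
      proof
        fix p assume p: "p \<in> \<Omega>"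
        have "dzbar \<alpha> \<beta> B p = 0" "dzbar \<alpha> \<beta> F p = 0"
          using dzbar_locally_zero[OF O p] as by auto
        thus "dzbar \<alpha> \<beta> (Lop \<alpha> \<beta> A B C D E F G w) p = 0"
          using key[OF w p] as p by (simp add: holomorphic_ab_on_def)
      qed
    qed
  qed
qed

end
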